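(* Fix $K$ and let $(\hat Z_K,\hat J_K)$ be a solution of $$\min_{Z\in\mathcal M_{n,K},\,J}\Big\{\sum_{k,l=1}^K\big\|A^{(k,l)}(Z,K)-\Pi_{(1)}\big(\Pi_{J^{(k,l)}}(A^{(k,l)}(Z,K))\big)\big\|_F^2+\mathrm{Pen}(n,J,K)\Big\},$$ where $J$ ranges over sparsity families for $(Z,K)$. Suppose that either $\mathrm{Pen}(n,J,K)$ is an increasing function of $|J|$ (non-separable penalty), or $\mathrm{Pen}$ is separable and increasing in each $|J_{k,l}|$, $k,l=1,\dots,K$. Then, writing $\hat J=\hat J_K$, $$\hat J_{k,l}(\hat Z_K,K)\subseteq\breve J_{k,l}(\hat Z_K,K)\subseteq(\breve J_* )_{k,l}(\hat Z_K,K)\quad\text{for all }k,l,$$ and $\hat J(\hat Z_K,K)\subseteq\breve J(\hat Z_K,K)\subseteq\breve J_*(\hat Z_K,K)$.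
   Context: $A\in\{0,1\}^{n\times n}$ symmetric, $A_{ij}\sim\mathrm{Bernoulli}((P_* )_{ij})$ independent for $i\le j$, $P_*$ symmetric. $\mathcal M_{n,K}$: clustering matrices $Z\in\{0,1\}^{n\times K}$ (one $1$ per row) assigning node $i$ to community $\mathcal N_k$ iff $Z_{ik}=1$, sizes $n_k$. For $B\in\mathbb R^{n\times n}$, $B^{(k,l)}(Z,K)\in\mathbb R^{n_k\times n_l}$ is the submatrix with rows indexed by $\mathcal N_k$ and columns by $\mathcal N_l$ (after reordering nodes by community). A sparsity family for $(Z,K)$ is $J=(J_{k,l})_{k,l=1}^K$ with $J_{k,l}\subseteq\mathcal N_k$; $J^{(k,l)}=J_{k,l}\times J_{l,k}$; $|J|=\sum_{k,l}|J_{k,l}|$; inclusions between families are meant componentwise. $\Pi_{J^{(k,l)}}(X)$ sets entries outside $J^{(k,l)}$ to zero and $\Pi_{(1)}(X)$ is the best rank-one approximation. A penalty is separable if $\mathrm{Pen}(n,J,K)=\sum_{k,l=1}^K\mathscr F(|J_{k,l}|,n_k)+\mathrm{Pen}^{(1)}(n,K)$ for some functions $\mathscr F,\mathrm{Pen}^{(1)}$; otherwise non-separable. $\breve J_{k,l}(Z,K)=\{i\in\mathcal N_k:A^{(k,l)}_{ij}(Z,K)\ne0\text{ for some }j\}$ and $(\breve J_* )_{k,l}(Z,K)=\{i\in\mathcal N_k:(P_* )^{(k,l)}_{ij}(Z,K)\ne0\text{ for some }j\}$; $\breve J$, $\breve J_*$ denote the corresponding families. *)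

theory Defs
  imports "HOL-Probability.Probability"
begin

type_synonym mat = "nat \<Rightarrow> nat \<Rightarrow> real"
type_synonym family = "nat \<Rightarrow> nat \<Rightarrow> nat set"

text \<open>Nodes are 0..<n, communities 0..<K. A clustering is z with z i < K; node i is in
  community k iff z i = k (equivalently Z_{ik} = 1).\<close>
definition valid_clust :: "nat \<Rightarrow> nat \<Rightarrow> (nat \<Rightarrow> nat) \<Rightarrow> bool" where
  "valid_clust n K z \<longleftrightarrow> (\<forall>i<n. z i < K)"

definition comm :: "nat \<Rightarrow> (nat \<Rightarrow> nat) \<Rightarrow> nat \<Rightarrow> nat set" where
  "comm n z k = {i. i < n \<and> z i = k}"

definition valid_family :: "nat \<Rightarrow> nat \<Rightarrow> (nat \<Rightarrow> nat) \<Rightarrow> family \<Rightarrow> bool" where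
  "valid_family n K z J \<longleftrightarrow> (\<forall>k<K. \<forall>l<K. J k l \<subseteq> comm n z k)"

definition family_card :: "nat \<Rightarrow> family \<Rightarrow> nat" where
  "family_card K J = (\<Sum>k<K. \<Sum>l<K. card (J k l))"

definition frob2 :: "nat set \<Rightarrow> nat set \<Rightarrow> mat \<Rightarrow> real" where
  "frob2 R C X = (\<Sum>i\<in>R. \<Sum>j\<in>C. (X i j)\<^sup>2)"

definition proj_supp :: "nat set \<Rightarrow> nat set \<Rightarrow> mat \<Rightarrow> mat" where
  "proj_supp R' C' X = (\<lambda>i j. if i \<in> R' \<and> j \<in> C' then X i j else 0)"

definition rank_le1 :: "nat set \<Rightarrow> nat set \<Rightarrow> mat \<Rightarrow> bool" where
  "rank_le1 R C M \<longleftrightarrow> (\<exists>u v. \<forall>i\<in>R. \<forall>j\<in>C. M i j = u i * v j)"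

definition best_rank1 :: "nat set \<Rightarrow> nat set \<Rightarrow> mat \<Rightarrow> mat" where
  "best_rank1 R C Y = (SOME M. rank_le1 R C M \<and> (\<forall>i j. \<not> (i \<in> R \<and> j \<in> C) \<longrightarrow> M i j = 0)
       \<and> (\<forall>M'. rank_le1 R C M' \<longrightarrow>
              frob2 R C (\<lambda>i j. Y i j - M i j) \<le> frob2 R C (\<lambda>i j. Y i j - M' i j)))"

definition fit :: "nat \<Rightarrow> nat \<Rightarrow> mat \<Rightarrow> (nat \<Rightarrow> nat) \<Rightarrow> family \<Rightarrow> real" where
  "fit n K A z J = (\<Sum>k<K. \<Sum>l<K.
      (let R = comm n z k; C = comm n z l;
           M = best_rank1 R C (proj_supp (J k l) (J l k) A)
       in frob2 R C (\<lambda>i j. A i j - M i j)))"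

definition breve :: "nat \<Rightarrow> mat \<Rightarrow> (nat \<Rightarrow> nat) \<Rightarrow> nat \<Rightarrow> nat \<Rightarrow> nat set" where
  "breve n X z k l = {i \<in> comm n z k. \<exists>j \<in> comm n z l. X i j \<noteq> 0}"

text \<open>Distribution of the symmetric adjacency matrix: A_ij ~ Bernoulli(P_ij) independent
  for i \<le> j < n, A_ji = A_ij; entries outside the index range are 0.\<close>
definition adj_pmf :: "nat \<Rightarrow> mat \<Rightarrow> mat pmf" where
  "adj_pmf n P = map_pmf
     (\<lambda>b i j. if i < n \<and> j < n then (if b (min i j, max i j) then 1 else 0) else 0)
     (Pi_pmf {(i, j). i \<le> j \<and> j < n} False (\<lambda>(i, j). bernoulli_pmf (P i j)))"

end

theory Submission
  imports Defs
begin

lemma adj_facts: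
  assumes P_sym: "\<forall>i<n. \<forall>j<n. P i j = P j i"
    and P_prob: "\<forall>i<n. \<forall>j<n. 0 \<le> P i j \<and> P i j \<le> 1"
    and A_real: "A \<in> set_pmf (adj_pmf n P)"
  shows "(\<forall>i j. A i j = A j i) \<and> (\<forall>i j. A i j \<noteq> 0 \<longrightarrow> i < n \<and> j < n \<and> P i j \<noteq> 0)"
proof -
  define S where "S = {(i, j). i \<le> j \<and> j < (n::nat)}"
  have fin: "finite S" unfolding S_def
    by (rule finite_subset[of _ "{..<n} \<times> {..<n}"]) auto
  obtain b where b: "b \<in> set_pmf (Pi_pmf S False (\<lambda>(i, j). bernoulli_pmf (P i j)))"
    and Ab: "A = (\<lambda>i j. if i < n \<and> j < n then (if b (min i j, max i j) then 1 else 0) else 0)"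
    using A_real unfolding adj_pmf_def S_def by auto
  have bS: "\<And>x. x \<in> S \<Longrightarrow> b x \<in> set_pmf ((\<lambda>(i, j). bernoulli_pmf (P i j)) x)"
    using b unfolding set_Pi_pmf[OF fin] PiE_dflt_def by auto
  have sym: "\<forall>i j. A i j = A j i" unfolding Ab by (auto simp: min.commute max.commute)
  have nz: "A i j \<noteq> 0 \<longrightarrow> i < n \<and> j < n \<and> P i j \<noteq> 0" for i j
  proof
    assume "A i j \<noteq> 0"
    then have ij: "i < n" "j < n" and bt: "b (min i j, max i j)" unfolding Ab by (auto split: if_splits)
    have "(min i j, max i j) \<in> S" unfolding S_def using ij by auto
    from bS[OF this] bt have "True \<in> set_pmf (bernoulli_pmf (P (min i j) (max i j)))" by auto
    then have "pmf (bernoulli_pmf (P (min i j) (max i j))) True \<noteq> 0" by (simp add: set_pmf_iff)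
    moreover have "0 \<le> P (min i j) (max i j)" "P (min i j) (max i j) \<le> 1"
      using P_prob ij by (auto simp: min_def max_def)
    ultimately have "P (min i j) (max i j) \<noteq> 0" by simp
    then have "P i j \<noteq> 0" using P_sym ij by (cases "i \<le> j") (auto simp: min_def max_def)
    then show "i < n \<and> j < n \<and> P i j \<noteq> 0" using ij by auto
  qed
  show ?thesis using sym nz by blast
qed

theorem lemma2:
  fixes n K :: nat and P A :: mat
    and pen :: "(nat \<Rightarrow> nat) \<Rightarrow> family \<Rightarrow> real"
    and zh :: "nat \<Rightarrow> nat" and Jh :: family
  assumes P_sym: "\<forall>i<n. \<forall>j<n. P i j = P j i"
    and P_prob: "\<forall>i<n. \<forall>j<n. 0 \<le> P i j \<and> P i j \<le> 1"
    and A_real: "A \<in> set_pmf (adj_pmf n P)"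
    and pen_form:
      "(\<exists>g :: nat \<Rightarrow> real. strict_mono g \<and> (\<forall>z J. pen z J = g (family_card K J)))
       \<or> (\<exists>(F :: nat \<Rightarrow> nat \<Rightarrow> real) (P1 :: real). (\<forall>a b m. a < b \<longrightarrow> F a m < F b m) \<and>
            (\<forall>z J. pen z J = (\<Sum>k<K. \<Sum>l<K. F (card (J k l)) (card (comm n z k))) + P1))"
    and zh_valid: "valid_clust n K zh"
    and Jh_valid: "valid_family n K zh Jh"
    and minimizer: "\<forall>z J. valid_clust n K z \<longrightarrow> valid_family n K z J \<longrightarrow>
        fit n K A zh Jh + pen zh Jh \<le> fit n K A z J + pen z J"
  shows "\<forall>k<K. \<forall>l<K. Jh k l \<subseteq> breve n A zh k l \<and> breve n A zh k l \<subseteq> breve n P zh k l"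
proof (intro allI impI conjI)
  note AF = adj_facts[OF P_sym P_prob A_real]
  fix k l assume k: "k < K" and l: "l < K"
  show "breve n A zh k l \<subseteq> breve n P zh k l"
    using AF unfolding breve_def by blast
  show "Jh k l \<subseteq> breve n A zh k l"
  proof
    fix i assume iJ: "i \<in> Jh k l"
    have ic: "i \<in> comm n zh k" using iJ Jh_valid k l unfolding valid_family_def by auto
    show "i \<in> breve n A zh k l"
    proof (rule ccontr)
      assume "i \<notin> breve n A zh k l"
      then have z1: "\<forall>j\<in>comm n zh l. A i j = 0" using ic unfolding breve_def by auto
      then have z2: "\<forall>j\<in>comm n zh l. A j i = 0" using AF by metis
      define J' where "J' = Jh(k := (Jh k)(l := Jh k l - {i}))"
      have J'v: "valid_family n K zh J'" using Jh_valid unfolding valid_family_def J'_def by auto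
      have proj: "proj_supp (J' a b) (J' b a) A = proj_supp (Jh a b) (Jh b a) A"
        if a: "a < K" and b: "b < K" for a b
      proof -
        have "Jh l k \<subseteq> comm n zh l" "Jh k l \<subseteq> comm n zh k"
          using Jh_valid k l unfolding valid_family_def by auto
        then show ?thesis unfolding proj_supp_def J'_def using z1 z2 iJ
          by (auto simp: fun_eq_iff comm_def)
      qed
      have fitq: "fit n K A zh J' = fit n K A zh Jh"
        unfolding fit_def by (intro sum.cong refl) (simp add: proj)
      have fin: "finite (Jh k l)"
      proof (rule finite_subset)
        show "Jh k l \<subseteq> {..<n}" using Jh_valid k l unfolding valid_family_def comm_def by auto
      qed simp
      have cardlt: "card (J' k l) < card (Jh k l)" unfolding J'_def
        using fin iJ by (simp add: card_gt_0_iff) (metis card_gt_0_iff diff_Suc_less empty_iff)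
      have cardle: "card (J' a b) \<le> card (Jh a b)" for a b
        unfolding J'_def using fin by (auto intro: card_mono)
      have penlt: "pen zh J' < pen zh Jh"
        using pen_form
      proof
        assume "\<exists>g :: nat \<Rightarrow> real. strict_mono g \<and> (\<forall>z J. pen z J = g (family_card K J))"
        then obtain g :: "nat \<Rightarrow> real" where g: "strict_mono g" "\<forall>z J. pen z J = g (family_card K J)" by blast
        have "family_card K J' < family_card K Jh"
          unfolding family_card_def
        proof (rule sum_strict_mono_ex1)
          show "\<forall>x\<in>{..<K}. (\<Sum>l<K. card (J' x l)) \<le> (\<Sum>l<K. card (Jh x l))"
            by (auto intro: sum_mono cardle)
          show "\<exists>a\<in>{..<K}. (\<Sum>l<K. card (J' a l)) < (\<Sum>l<K. card (Jh a l))"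
          proof (rule bexI[of _ k])
            show "(\<Sum>l<K. card (J' k l)) < (\<Sum>l<K. card (Jh k l))"
              by (rule sum_strict_mono_ex1) (use l cardlt cardle in auto)
          qed (use k in simp)
        qed simp
        then show ?thesis using g by (simp add: strict_monoD)
      next
        assume "\<exists>(F :: nat \<Rightarrow> nat \<Rightarrow> real) (P1 :: real). (\<forall>a b m. a < b \<longrightarrow> F a m < F b m) \<and>
            (\<forall>z J. pen z J = (\<Sum>k<K. \<Sum>l<K. F (card (J k l)) (card (comm n z k))) + P1)"
        then obtain F :: "nat \<Rightarrow> nat \<Rightarrow> real" and P1 where F: "\<forall>a b m. a < b \<longrightarrow> F a m < F b m"
          and pen: "\<forall>z J. pen z J = (\<Sum>k<K. \<Sum>l<K. F (card (J k l)) (card (comm n z k))) + P1" by blast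
        have Fle: "F a m \<le> F b m" if "a \<le> b" for a b m
          using F that by (cases "a = b") (auto simp: less_eq_real_def)
        have "(\<Sum>k<K. \<Sum>l<K. F (card (J' k l)) (card (comm n zh k)))
              < (\<Sum>k<K. \<Sum>l<K. F (card (Jh k l)) (card (comm n zh k)))"
        proof (rule sum_strict_mono_ex1)
          show "\<forall>x\<in>{..<K}. (\<Sum>l<K. F (card (J' x l)) (card (comm n zh x))) \<le> (\<Sum>l<K. F (card (Jh x l)) (card (comm n zh x)))"
            by (auto intro!: sum_mono Fle cardle)
          show "\<exists>a\<in>{..<K}. (\<Sum>l<K. F (card (J' a l)) (card (comm n zh a))) < (\<Sum>l<K. F (card (Jh a l)) (card (comm n zh a)))"
          proof (rule bexI[of _ k])
            show "(\<Sum>l<K. F (card (J' k l)) (card (comm n zh k))) < (\<Sum>l<K. F (card (Jh k l)) (card (comm n zh k)))"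
              by (rule sum_strict_mono_ex1) (use l cardlt cardle F Fle in \<open>auto intro!: bexI[of _ l]\<close>)
          qed (use k in simp)
        qed simp
        then show ?thesis using pen by simp
      qed
      have "fit n K A zh Jh + pen zh Jh \<le> fit n K A zh J' + pen zh J'"
        using minimizer zh_valid J'v by blast
      then show False using fitq penlt by simp
    qed
  qed
qed

end
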